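(* For every $\varepsilon>0$ there is $\varepsilon'=\varepsilon'(\varepsilon)>0$, with $\varepsilon'(\varepsilon)\to0$ as $\varepsilon\to0$, such that $$\dim_H Z(\varepsilon)\le\varepsilon'+\varepsilon+\varepsilon\log_2 15,$$ where $$Z(\varepsilon)=\bigcap_{N=1}^\infty\bigcup_{n=N}^\infty\bigcup_{m=1}^\infty\bigcup_{(\mathbf i,\mathbf j)\in\mathcal F^{n,m}(\varepsilon)}\widehat Q_{\mathbf i}^{\mathbf j}.$$
   Context: $\mathbb T=\mathbb R/\mathbb Z$, $Tx=2x\bmod1$, $d$ the usual distance on $\mathbb T$. $\mathcal D_n$ is the set of dyadic intervals $[m/2^n,(m+1)/2^n)$. For $i,j\ge1$, $Q_i^j=\{x:d(T^ix,x)\le2^{-j}\}$ and $\widehat Q_i^j$ is the union of intervals in $\mathcal D_{i+j}$ meeting $Q_i^j$; for $\mathbf i=(i_1,\dots,i_k)$, $\mathbf j=(j_1,\dots,j_k)$, $\widehat Q_{\mathbf i}^{\mathbf j}=\bigcap_{\nu=1}^k\widehat Q_{i_\nu}^{j_\nu}$. $\mathcal F_k(\varepsilon)$ is the set of $(i_1\cdots i_k;j_1\cdots j_k)$ of positive integers, $i_1<\dots<i_k$, with (i) $i_{l+1}-i_l\ge j_l$ for $1\le l<k$, (ii) $k\le\varepsilon i_k$, (iii) $i_k-\sum_{1\le l<k}j_l\le\varepsilon i_k$; $\mathcal F^{n,m}(\varepsilon)$ is the union over $k$ of those elements with $i_k=n$, $j_k=m$. (The $\varepsilon'$ is the exponent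 for which $\#\mathcal F^{n,m}(\varepsilon)\le C2^{\varepsilon'n}$ for all $n,m$.) *)

theory Defs
  imports "HOL-Analysis.Analysis"
begin

text \<open>The circle T = R/Z is represented by the interval [0,1) of reals.\<close>

definition circ_dist :: "real \<Rightarrow> real \<Rightarrow> real" where
  "circ_dist x y = min (frac (x - y)) (1 - frac (x - y))"

definition doubling :: "real \<Rightarrow> real" where
  "doubling x = frac (2 * x)"

definition circ_diam :: "real set \<Rightarrow> real" where
  "circ_diam U = (if U = {} then 0 else Sup {circ_dist x y | x y. x \<in> U \<and> y \<in> U})"

definition hcontent :: "real \<Rightarrow> real \<Rightarrow> real set \<Rightarrow> ennreal" where
  "hcontent s \<delta> A = (INF U \<in> {U :: nat \<Rightarrow> real set. (\<forall>k. U k \<subseteq> {0..<1} \<and> circ_diam (U k) \<le> \<delta>)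
        \<and> A \<subseteq> (\<Union>k. U k)}. (\<Sum>k. ennreal (circ_diam (U k) powr s)))"

definition hmeasure :: "real \<Rightarrow> real set \<Rightarrow> ennreal" where
  "hmeasure s A = (SUP \<delta> \<in> {0<..}. hcontent s \<delta> A)"

definition hdim :: "real set \<Rightarrow> real" where
  "hdim A = Inf {s. 0 \<le> s \<and> hmeasure s A = 0}"

definition dyadic :: "nat \<Rightarrow> nat \<Rightarrow> real set" where
  "dyadic n m = {real m / 2 ^ n ..< (real m + 1) / 2 ^ n}"

definition Q :: "nat \<Rightarrow> nat \<Rightarrow> real set" where
  "Q i j = {x \<in> {0..<1}. circ_dist ((doubling ^^ i) x) x \<le> 1 / 2 ^ j}"

definition Qhat :: "nat \<Rightarrow> nat \<Rightarrow> real set" where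
  "Qhat i j = \<Union> {dyadic (i + j) m | m. m < 2 ^ (i + j) \<and> dyadic (i + j) m \<inter> Q i j \<noteq> {}}"

definition Qhat_multi :: "nat list \<Rightarrow> nat list \<Rightarrow> real set" where
  "Qhat_multi is js = (\<Inter> l \<in> {..<length is}. Qhat (is ! l) (js ! l))"

text \<open>F^{n,m}(eps): tuples (i_1..i_k; j_1..j_k), k >= 1, as two lists of length k.\<close>

definition Fset :: "real \<Rightarrow> nat \<Rightarrow> nat \<Rightarrow> (nat list \<times> nat list) set" where
  "Fset \<epsilon> n m = {(is, js). 1 \<le> length is \<and> length js = length is
     \<and> (\<forall>l < length is. 0 < is ! l \<and> 0 < js ! l)
     \<and> sorted_wrt (<) is
     \<and> (\<forall>l. l + 1 < length is \<longrightarrow> js ! l \<le> is ! (l + 1) - is ! l)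
     \<and> real (length is) \<le> \<epsilon> * real (is ! (length is - 1))
     \<and> real (is ! (length is - 1)) - (\<Sum>l < length is - 1. real (js ! l))
          \<le> \<epsilon> * real (is ! (length is - 1))
     \<and> is ! (length is - 1) = n \<and> js ! (length is - 1) = m}"

definition Zset :: "real \<Rightarrow> real set" where
  "Zset \<epsilon> = (\<Inter> N \<in> {1..}. \<Union> n \<in> {N..}. \<Union> m \<in> {1..}. \<Union> (is, js) \<in> Fset \<epsilon> n m. Qhat_multi is js)"

end

theory Submission
  imports Defs "HOL-Real_Asymp.Real_Asymp"
begin


definition idx :: "nat \<Rightarrow> real \<Rightarrow> nat" where
  "idx r x = nat \<lfloor>2 ^ r * x\<rfloor>"

lemma mem_dyadic: "x \<in> dyadic r b \<longleftrightarrow> 0 \<le> x \<and> idx r x = b"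
proof -
  have p: "(0::real) < 2 ^ r" by simp
  have "x \<in> dyadic r b \<longleftrightarrow> real b \<le> 2 ^ r * x \<and> 2 ^ r * x < real b + 1"
    unfolding dyadic_def using p by (auto simp: field_simps)
  also have "\<dots> \<longleftrightarrow> \<lfloor>2 ^ r * x\<rfloor> = int b"
    by (simp add: floor_eq_iff)
  also have "\<dots> \<longleftrightarrow> 0 \<le> x \<and> idx r x = b"
    unfolding idx_def
  proof
    assume h: "\<lfloor>2 ^ r * x\<rfloor> = int b"
    then have "0 \<le> 2 ^ r * x" by (metis floor_less_zero linorder_not_less of_nat_0_le_iff)
    then have "0 \<le> x" using p by (simp add: zero_le_mult_iff)
    then show "0 \<le> x \<and> nat \<lfloor>2 ^ r * x\<rfloor> = b" using h by simp
  next
    assume "0 \<le> x \<and> nat \<lfloor>2 ^ r * x\<rfloor> = b"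
    then show "\<lfloor>2 ^ r * x\<rfloor> = int b" by auto
  qed
  finally show ?thesis .
qed

lemma idx_div: assumes "0 \<le> x" shows "idx (r + p) x div 2 ^ p = idx r x"
proof -
  have "\<lfloor>2 ^ (r + p) * x\<rfloor> div 2 ^ p = \<lfloor>2 ^ (r + p) * x / real_of_int (2 ^ p)\<rfloor>"
    by (subst floor_divide_real_eq_div) auto
  also have "2 ^ (r + p) * x / real_of_int (2 ^ p) = 2 ^ r * x"
    by (simp add: power_add)
  finally have e: "\<lfloor>2 ^ (r + p) * x\<rfloor> div 2 ^ p = \<lfloor>2 ^ r * x\<rfloor>" .
  have "0 \<le> \<lfloor>2 ^ (r + p) * x\<rfloor>" using assms by simp
  then show ?thesis unfolding idx_def using e
    by (metis nat_div_distrib nat_numeral nat_power_eq zero_le_numeral)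
qed

lemma idx_lt: assumes "0 \<le> x" "x < 1" shows "idx r x < 2 ^ r"
proof -
  have "2 ^ r * x < 2 ^ r" using assms by simp
  then have "\<lfloor>2 ^ r * x\<rfloor> < 2 ^ r"
    by (metis floor_less_iff of_int_numeral of_int_power)
  moreover have "0 \<le> \<lfloor>2 ^ r * x\<rfloor>" using assms by simp
  ultimately show ?thesis unfolding idx_def by (simp add: nat_less_iff)
qed

lemma frac_two_frac: "frac (2 * frac (t::real)) = frac (2 * t)"
proof -
  have "2 * frac t = 2 * t - of_int (2 * \<lfloor>t\<rfloor>)" by (simp add: frac_def algebra_simps)
  then show ?thesis unfolding frac_def using floor_diff_of_int[of "2*t" "2*\<lfloor>t\<rfloor>"] by simp
qed

lemma doubling_iter: assumes "0 \<le> x" "x < 1" shows "(doubling ^^ i) x = frac (2 ^ i * x)"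
proof (induction i)
  case 0
  then show ?case using assms by (simp add: frac_eq)
next
  case (Suc i)
  then show ?case by (simp add: doubling_def frac_two_frac mult.assoc)
qed

lemma circ_dist_nonneg: "0 \<le> circ_dist x y"
  unfolding circ_dist_def using frac_ge_0[of "x-y"] frac_lt_1[of "x-y"] by (simp add: min_def)

lemma circ_dist_lt1: "circ_dist x y < 1"
  unfolding circ_dist_def using frac_lt_1[of "x-y"] min.cobounded1[of "frac (x-y)" "1 - frac(x-y)"] by linarith

lemma circ_dist_le_abs: assumes "\<bar>x - y\<bar> < 1" shows "circ_dist x y \<le> \<bar>x - y\<bar>"
proof (cases "0 \<le> x - y")
  case True
  then have "frac (x - y) = x - y" using assms by (simp add: frac_eq)
  then show ?thesis unfolding circ_dist_def using True by simp
next
  case False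
  then have "\<lfloor>x - y\<rfloor> = -1" using assms by (simp add: floor_eq_iff)
  then have "frac (x - y) = x - y + 1" by (simp add: frac_def)
  then show ?thesis unfolding circ_dist_def using False by simp
qed

lemma circ_diam_nonneg: "0 \<le> circ_diam U"
proof (cases "U = {}")
  case False
  then obtain x where x: "x \<in> U" by auto
  have bdd: "bdd_above {circ_dist x y | x y. x \<in> U \<and> y \<in> U}"
    by (rule bdd_aboveI[where M=1]) (auto intro: less_imp_le circ_dist_lt1)
  have "circ_dist x x \<in> {circ_dist x y | x y. x \<in> U \<and> y \<in> U}" using x by auto
  then have "circ_dist x x \<le> Sup {circ_dist x y | x y. x \<in> U \<and> y \<in> U}"
    using bdd by (rule cSup_upper)
  then show ?thesis using False circ_dist_nonneg[of x x] unfolding circ_diam_def by simp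
qed (simp add: circ_diam_def)

lemma circ_diam_dyadic: "circ_diam (dyadic r b) \<le> 1 / 2 ^ r"
proof (cases "dyadic r b = {}")
  case False
  have bnd: "\<And>x y. x \<in> dyadic r b \<Longrightarrow> y \<in> dyadic r b \<Longrightarrow> circ_dist x y \<le> 1 / 2 ^ r"
  proof -
    fix x y assume "x \<in> dyadic r b" "y \<in> dyadic r b"
    then have a: "real b / 2^r \<le> x" "x < (real b + 1) / 2 ^ r" "real b / 2^r \<le> y" "y < (real b + 1) / 2 ^ r"
      unfolding dyadic_def by auto
    have "(real b + 1) / 2 ^ r = real b / 2^r + 1 / 2^r" by (simp add: add_divide_distrib)
    then have h: "\<bar>x - y\<bar> < 1 / 2 ^ r" using a by (simp add: abs_less_iff)
    have "1 / 2 ^ r \<le> (1::real)" by simp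
    then have "\<bar>x - y\<bar> < 1" using h by linarith
    then show "circ_dist x y \<le> 1 / 2 ^ r" using circ_dist_le_abs h by force
  qed
  have "Sup {circ_dist x y | x y. x \<in> dyadic r b \<and> y \<in> dyadic r b} \<le> 1 / 2 ^ r"
  proof (intro cSup_least)
    obtain z where "z \<in> dyadic r b" using False by auto
    then show "{circ_dist x y | x y. x \<in> dyadic r b \<and> y \<in> dyadic r b} \<noteq> {}" by auto
  qed (use bnd in auto)
  then show ?thesis using False unfolding circ_diam_def by simp
qed (simp add: circ_diam_def)

lemma dyadic_sub: assumes "b < 2 ^ r" shows "dyadic r b \<subseteq> {0..<1}"
proof -
  have "real b + 1 \<le> 2 ^ r" using assms
    by (metis of_nat_1 of_nat_add of_nat_le_iff of_nat_numeral of_nat_power Suc_leI Suc_eq_plus1)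
  then have "(real b + 1) / 2 ^ r \<le> 1" by simp
  moreover have "0 \<le> real b / 2 ^ r" by simp
  ultimately show ?thesis unfolding dyadic_def by auto
qed




lemma count6: "finite {w::nat. L \<le> real w \<and> real w \<le> L + 5} \<and> card {w::nat. L \<le> real w \<and> real w \<le> L + 5} \<le> 6"
proof -
  have sub: "{w::nat. L \<le> real w \<and> real w \<le> L + 5} \<subseteq> {nat \<lceil>L\<rceil> ..< nat \<lceil>L\<rceil> + 6}"
  proof
    fix w assume "w \<in> {w::nat. L \<le> real w \<and> real w \<le> L + 5}"
    then have w: "L \<le> real w" "real w \<le> L + 5" by auto
    have "L \<le> real_of_int (int w)" using w(1) by simp
    then have "\<lceil>L\<rceil> \<le> int w" by (rule ceiling_le)
    then have 1: "nat \<lceil>L\<rceil> \<le> w" by (simp only: nat_le_iff)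
    have "L \<le> of_int \<lceil>L\<rceil>" by (rule le_of_int_ceiling)
    then have "real w < of_int \<lceil>L\<rceil> + 6" using w(2) by linarith
    then have "int w < \<lceil>L\<rceil> + 6" by linarith
    then have 2: "w < nat \<lceil>L\<rceil> + 6" by linarith
    show "w \<in> {nat \<lceil>L\<rceil> ..< nat \<lceil>L\<rceil> + 6}" using 1 2 by simp
  qed
  show ?thesis using finite_subset[OF sub] card_mono[OF _ sub] by simp
qed

lemma two_le_pow: "1 \<le> j \<Longrightarrow> (2::real) \<le> 2 ^ j"
  by (cases j) auto

definition cz :: "nat \<Rightarrow> nat \<Rightarrow> nat \<Rightarrow> int \<Rightarrow> real" where
  "cz i j a z = 2 ^ j * 2 ^ i * (real a + real_of_int z) / (2 ^ i - 1)"

lemma geo_point: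
  assumes i: "1 \<le> i" and j: "1 \<le> j" and xQ: "x \<in> Q i j" and xa: "idx i x = a"
  shows "\<exists>z\<in>{-1,0,1::int}. cz i j a z - 3 \<le> real (idx (i + j) x) \<and> real (idx (i + j) x) \<le> cz i j a z - 3 + 5"
proof -
  define p :: real where "p = 2 ^ i"
  define e :: real where "e = 1 / 2 ^ j"
  have p2: "2 \<le> p" unfolding p_def using i by (rule two_le_pow)
  have "2 \<le> (2::real) ^ j" using j by (rule two_le_pow)
  then have e0: "0 < e" "e \<le> 1/2" unfolding e_def by (auto simp: field_simps)
  have x01: "0 \<le> x" "x < 1" using xQ unfolding Q_def by auto
  have f0: "0 \<le> \<lfloor>p * x\<rfloor>" using x01 p2 by simp
  have fl: "\<lfloor>p * x\<rfloor> = int a" using xa f0 unfolding idx_def p_def by (metis nat_0_le)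
  define y where "y = p * x - a"
  have y01: "0 \<le> y" "y < 1" using fl unfolding y_def by (auto simp: floor_eq_iff)
  have fy: "frac (p * x) = y" unfolding y_def frac_def using fl by simp
  have "(doubling ^^ i) x = y" using doubling_iter[OF x01, of i] fy unfolding p_def by simp
  moreover have "circ_dist ((doubling ^^ i) x) x \<le> e" using xQ unfolding Q_def e_def by simp
  ultimately have cd: "circ_dist y x \<le> e" by simp
  define t where "t = y - x"
  have t1: "-1 < t" "t < 1" unfolding t_def using x01 y01 by auto
  have "\<exists>z::int. z \<in> {-1,0,1::int} \<and> \<bar>t - z\<bar> \<le> e"
  proof -
    have flt: "\<lfloor>t\<rfloor> = -1 \<or> \<lfloor>t\<rfloor> = 0"
    proof (cases "0 \<le> t")
      case True then show ?thesis using t1 by (simp add: floor_eq_iff)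
    next
      case False then show ?thesis using t1 by (simp add: floor_eq_iff)
    qed
    have "frac t \<le> e \<or> 1 - frac t \<le> e" using cd unfolding circ_dist_def t_def by (simp add: min_le_iff_disj)
    then show ?thesis
    proof
      assume "frac t \<le> e"
      have "t - of_int \<lfloor>t\<rfloor> = frac t" by (simp add: frac_def)
      then have A: "\<bar>t - of_int \<lfloor>t\<rfloor>\<bar> \<le> e" using \<open>frac t \<le> e\<close> frac_ge_0[of t] by simp
      have B: "\<lfloor>t\<rfloor> \<in> {-1,0,1::int}" using flt by blast
      show ?thesis by (rule exI[of _ "\<lfloor>t\<rfloor>"], rule conjI[OF B A])
    next
      assume "1 - frac t \<le> e"
      have "t - of_int (\<lfloor>t\<rfloor> + 1) = frac t - 1" by (simp add: frac_def)
      then have A: "\<bar>t - of_int (\<lfloor>t\<rfloor> + 1)\<bar> \<le> e" using \<open>1 - frac t \<le> e\<close> frac_lt_1[of t] by simp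
      have B: "\<lfloor>t\<rfloor> + 1 \<in> {-1,0,1::int}" using flt by auto
      show ?thesis by (rule exI[of _ "\<lfloor>t\<rfloor> + 1"], rule conjI[OF B A])
    qed
  qed
  then obtain z :: int where z: "z \<in> {-1,0,1::int}" "\<bar>t - z\<bar> \<le> e" by (elim exE conjE)
  define d where "d = t - z"
  have "(p - 1) * x = a + z + d" unfolding d_def t_def y_def by (simp add: algebra_simps)
  then have xe: "x = (a + z + d) / (p - 1)" using p2 by (simp add: field_simps)
  define X where "X = 2 ^ j * p * x"
  have pj: "(2::real) ^ i = p" unfolding p_def by simp
  have "X - cz i j a z = 2 ^ j * p * (x - (a + z) / (p - 1))"
    unfolding X_def cz_def pj by (simp add: algebra_simps diff_divide_distrib)
  also have "x - (a + z) / (p - 1) = d / (p - 1)" using p2 xe by (simp add: diff_divide_distrib[symmetric])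
  finally have Xd: "X - cz i j a z = 2 ^ j * p * (d / (p - 1))" .
  have "\<bar>X - cz i j a z\<bar> = 2 ^ j * \<bar>d\<bar> * (p / (p - 1))"
    unfolding Xd using p2 by (simp add: abs_mult abs_divide)
  have dj: "2 ^ j * \<bar>d\<bar> \<le> 1" using z(2) unfolding d_def e_def by (simp add: field_simps)
  have pp: "p / (p - 1) \<le> 2" using p2 by (simp add: field_simps)
  have "2 ^ j * \<bar>d\<bar> * (p / (p - 1)) \<le> 1 * 2"
    using p2 dj pp by (intro mult_mono) auto
  then have "\<bar>X - cz i j a z\<bar> \<le> 2" using \<open>\<bar>X - cz i j a z\<bar> = _\<close> by simp
  then have Xc: "cz i j a z - 2 \<le> X" "X \<le> cz i j a z + 2" by (auto simp: abs_le_iff)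
  have X0: "0 \<le> X" unfolding X_def using x01 p2 by simp
  have "idx (i + j) x = nat \<lfloor>X\<rfloor>" unfolding idx_def X_def p_def by (simp add: power_add mult.commute)
  then have rx: "real (idx (i + j) x) = of_int \<lfloor>X\<rfloor>" using X0 by simp
  have fb: "X - 1 < of_int \<lfloor>X\<rfloor>" "of_int \<lfloor>X\<rfloor> \<le> X" by linarith+
  have "cz i j a z - 3 \<le> real (idx (i + j) x) \<and> real (idx (i + j) x) \<le> cz i j a z - 3 + 5"
    using fb Xc rx by linarith
  then show ?thesis using z(1) by blast
qed

lemma geo_card:
  assumes i: "1 \<le> i" and j: "1 \<le> j"
  shows "finite (idx (i + j) ` {x \<in> Q i j. idx i x = a}) \<and> card (idx (i + j) ` {x \<in> Q i j. idx i x = a}) \<le> 18"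
proof -
  define W where "W z = {w::nat. cz i j a z - 3 \<le> real w \<and> real w \<le> cz i j a z - 3 + 5}" for z
  have sub: "idx (i + j) ` {x \<in> Q i j. idx i x = a} \<subseteq> (\<Union>z\<in>{-1,0,1::int}. W z)"
    using geo_point[OF i j] unfolding W_def by fastforce
  have fW0: "\<And>z. finite (W z) \<and> card (W z) \<le> 6" unfolding W_def by (rule count6)
  have fW: "\<And>z. finite (W z)" "\<And>z. card (W z) \<le> 6" using fW0 by auto
  have fin: "finite (\<Union>z\<in>{-1,0,1::int}. W z)" using fW by auto
  have "card (\<Union>z\<in>{-1,0,1::int}. W z) \<le> (\<Sum>z\<in>{-1,0,1::int}. card (W z))" by (rule card_UN_le) simp
  also have "\<dots> \<le> (\<Sum>z\<in>{-1,0,1::int}. 6)" by (rule sum_mono) (use fW in auto)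
  also have "\<dots> = 18" by simp
  finally show ?thesis using finite_subset[OF sub fin] card_mono[OF fin sub] by simp
qed




lemma Qhat_mem: assumes "x \<in> Qhat i j"
  shows "0 \<le> x \<and> x < 1 \<and> (\<exists>x'\<in>Q i j. idx (i + j) x' = idx (i + j) x)"
proof -
  obtain m where m: "m < 2 ^ (i + j)" "dyadic (i + j) m \<inter> Q i j \<noteq> {}" "x \<in> dyadic (i + j) m"
    using assms unfolding Qhat_def by auto
  obtain x' where x': "x' \<in> dyadic (i + j) m" "x' \<in> Q i j" using m(2) by auto
  have "x \<in> {0..<1}" using dyadic_sub[OF m(1)] m(3) by auto
  moreover have "idx (i + j) x = m" "idx (i + j) x' = m" using m(3) x'(1) by (auto simp: mem_dyadic)
  ultimately show ?thesis using x'(2) by auto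
qed

lemma Qhat_sub: "Qhat i j \<subseteq> {0..<1}" using Qhat_mem by fastforce

lemma finite_idx_img: assumes "S \<subseteq> {0..<1}" shows "finite (idx r ` S)"
proof -
  have "idx r ` S \<subseteq> {..<2 ^ r}" using assms idx_lt by fastforce
  then show ?thesis using finite_subset by blast
qed

lemma card_fibers:
  assumes "finite C" "0 < q"
  shows "finite {a::nat. a div q \<in> C} \<and> card {a::nat. a div q \<in> C} \<le> q * card C"
proof -
  have sub: "{a::nat. a div q \<in> C} \<subseteq> (\<Union>c\<in>C. {c * q ..< c * q + q})"
  proof
    fix a assume "a \<in> {a::nat. a div q \<in> C}"
    then have h1: "a div q \<in> C" by simp
    have h2: "a div q * q \<le> a" by (simp add: div_times_less_eq_dividend)
    have h3: "a < a div q * q + q"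
      using assms(2) by (metis add.commute div_mult_mod_eq mod_less_divisor nat_add_left_cancel_less)
    have "a \<in> {a div q * q ..< a div q * q + q}" using h2 h3 by simp
    then show "a \<in> (\<Union>c\<in>C. {c * q ..< c * q + q})" using h1 by (rule UN_I[rotated])
  qed
  have "card (\<Union>c\<in>C. {c * q ..< c * q + q}) \<le> (\<Sum>c\<in>C. card {c * q ..< c * q + q})"
    using assms(1) by (rule card_UN_le)
  also have "\<dots> = q * card C" by simp
  finally show ?thesis using card_mono[OF _ sub] finite_subset[OF sub] assms by (meson finite_UN_I finite_atLeastLessThan le_trans)
qed

lemma step_card:
  assumes S: "S \<subseteq> {0..<1}" and ri: "r \<le> i" and i: "1 \<le> i" and j: "1 \<le> j"
  shows "card (idx (i + j) ` (S \<inter> Qhat i j)) \<le> 18 * 2 ^ (i - r) * card (idx r ` S)"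
proof -
  define A where "A = idx i ` (S \<inter> Qhat i j)"
  define G where "G a = idx (i + j) ` {x \<in> Q i j. idx i x = a}" for a
  have finA: "finite A" unfolding A_def using S by (intro finite_idx_img) auto
  have sub: "idx (i + j) ` (S \<inter> Qhat i j) \<subseteq> (\<Union>a\<in>A. G a)"
  proof
    fix w assume "w \<in> idx (i + j) ` (S \<inter> Qhat i j)"
    then obtain x where x: "x \<in> S" "x \<in> Qhat i j" "w = idx (i + j) x" by auto
    obtain x' where x': "x' \<in> Q i j" "idx (i + j) x' = idx (i + j) x" "0 \<le> x"
      using Qhat_mem[OF x(2)] by auto
    have x'0: "0 \<le> x'" using x'(1) unfolding Q_def by auto
    have "idx i x' = idx i x" using idx_div[OF x'0, of i j] idx_div[OF x'(3), of i j] x'(2) by simp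
    then have "x' \<in> {xa \<in> Q i j. idx i xa = idx i x}" using x'(1) by simp
    moreover have "w = idx (i + j) x'" using x'(2) x(3) by simp
    ultimately have "w \<in> G (idx i x)" unfolding G_def by (rule rev_image_eqI)
    moreover have "idx i x \<in> A" unfolding A_def using x by auto
    ultimately show "w \<in> (\<Union>a\<in>A. G a)" by auto
  qed
  have fG: "\<And>a. finite (G a) \<and> card (G a) \<le> 18" unfolding G_def using geo_card[OF i j] by blast
  have "card (idx (i + j) ` (S \<inter> Qhat i j)) \<le> card (\<Union>a\<in>A. G a)"
    using sub finA fG by (intro card_mono) auto
  also have "\<dots> \<le> (\<Sum>a\<in>A. card (G a))" using finA by (rule card_UN_le)
  also have "\<dots> \<le> (\<Sum>a\<in>A. 18)" using fG by (intro sum_mono) auto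
  also have "\<dots> = 18 * card A" by simp
  also have "card A \<le> 2 ^ (i - r) * card (idx r ` S)"
  proof -
    have "A \<subseteq> {a. a div 2 ^ (i - r) \<in> idx r ` S}"
    proof
      fix a assume "a \<in> A"
      then obtain x where x: "x \<in> S" "x \<in> Qhat i j" "a = idx i x" unfolding A_def by auto
      have "0 \<le> x" using Qhat_mem[OF x(2)] by auto
      then have "idx (r + (i - r)) x div 2 ^ (i - r) = idx r x" by (rule idx_div)
      then show "a \<in> {a. a div 2 ^ (i - r) \<in> idx r ` S}" using x ri by auto
    qed
    moreover have cf: "finite {a. a div 2 ^ (i - r) \<in> idx r ` S} \<and> card {a. a div 2 ^ (i - r) \<in> idx r ` S} \<le> 2 ^ (i - r) * card (idx r ` S)"
      by (rule card_fibers[OF finite_idx_img[OF S]]) simp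
    ultimately have "card A \<le> card {a. a div 2 ^ (i - r) \<in> idx r ` S}"
      by (intro card_mono) auto
    also have "\<dots> \<le> 2 ^ (i - r) * card (idx r ` S)" using cf by simp
    finally show ?thesis .
  qed
  then have "18 * card A \<le> 18 * (2 ^ (i - r) * card (idx r ` S))" by simp
  finally show ?thesis by (simp add: mult.assoc)
qed




lemma multi_card:
  fixes "is" js :: "nat list"
  assumes pos: "\<forall>l<length is. 0 < is!l \<and> 0 < js!l"
    and srt: "sorted_wrt (<) is"
    and gap: "\<forall>l. l + 1 < length is \<longrightarrow> js!l \<le> is!(l+1) - is!l"
  shows "q < length is \<Longrightarrow> (\<Inter>l\<in>{..<Suc q}. Qhat (is!l) (js!l)) \<subseteq> {0..<1} \<and>
     card (idx (is!q + js!q) ` (\<Inter>l\<in>{..<Suc q}. Qhat (is!l) (js!l))) * 2^(\<Sum>l<q. js!l) \<le> 18^(Suc q) * 2^(is!q)"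
proof (induction q)
  case 0
  have i: "1 \<le> is!0" "1 \<le> js!0" using pos 0 by auto
  have I: "(\<Inter>l\<in>{..<Suc 0}. Qhat (is!l) (js!l)) = Qhat (is!0) (js!0)" by (simp add: lessThan_Suc)
  have c1: "card (idx 0 ` {0..<1}) \<le> 1"
  proof -
    have "idx 0 ` {0..<1} \<subseteq> {..<1}" using idx_lt[of _ 0] by fastforce
    then show ?thesis using card_mono[of "{..<1::nat}"] by fastforce
  qed
  have "card (idx (is!0 + js!0) ` ({0..<1} \<inter> Qhat (is!0) (js!0))) \<le> 18 * 2 ^ (is!0 - 0) * card (idx 0 ` {0..<1})"
    by (rule step_card) (use i in auto)
  also have "\<dots> \<le> 18 * 2 ^ (is!0)" using c1 by simp
  finally have "card (idx (is!0 + js!0) ` Qhat (is!0) (js!0)) \<le> 18 * 2 ^ (is!0)"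
    using Qhat_sub[of "is!0" "js!0"] by (simp add: Int_absorb1)
  then show ?case unfolding I using Qhat_sub by simp
next
  case (Suc q)
  define S where "S = (\<Inter>l\<in>{..<Suc q}. Qhat (is!l) (js!l))"
  have IH: "S \<subseteq> {0..<1}" "card (idx (is!q + js!q) ` S) * 2^(\<Sum>l<q. js!l) \<le> 18^(Suc q) * 2^(is!q)"
    using Suc by (auto simp: S_def)
  have I: "(\<Inter>l\<in>{..<Suc (Suc q)}. Qhat (is!l) (js!l)) = S \<inter> Qhat (is!Suc q) (js!Suc q)"
    unfolding S_def by (simp add: lessThan_Suc Int_commute)
  have lt: "is!q < is!Suc q" using srt Suc.prems by (simp add: sorted_wrt_iff_nth_less)
  have jq: "js!q \<le> is!Suc q - is!q" using gap Suc.prems by auto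
  have r: "is!q + js!q \<le> is!Suc q" using lt jq by simp
  have i: "1 \<le> is!Suc q" "1 \<le> js!Suc q" using pos Suc.prems by auto
  define c where "c = card (idx (is!q + js!q) ` S)"
  define c' where "c' = card (idx (is!Suc q + js!Suc q) ` (S \<inter> Qhat (is!Suc q) (js!Suc q)))"
  define E where "E = is!Suc q - (is!q + js!q)"
  have st: "c' \<le> 18 * 2 ^ E * c" unfolding c'_def c_def E_def
    by (rule step_card[OF IH(1) r i])
  have ih: "c * 2^(\<Sum>l<q. js!l) \<le> 18^(Suc q) * 2^(is!q)" using IH(2) unfolding c_def .
  have "c' * 2^(\<Sum>l<Suc q. js!l) = c' * 2^(\<Sum>l<q. js!l) * 2 ^ (js!q)" by (simp add: power_add)
  also have "\<dots> \<le> 18 * 2 ^ E * c * 2^(\<Sum>l<q. js!l) * 2 ^ (js!q)"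
    using st by (intro mult_le_mono1) 
  also have "\<dots> = 18 * 2 ^ E * 2 ^ (js!q) * (c * 2^(\<Sum>l<q. js!l))" by (simp add: algebra_simps)
  also have "\<dots> \<le> 18 * 2 ^ E * 2 ^ (js!q) * (18^(Suc q) * 2^(is!q))"
    using ih by (intro mult_le_mono2)
  also have "\<dots> = 18 ^ Suc (Suc q) * 2 ^ (E + js!q + is!q)" by (simp add: power_add algebra_simps)
  also have "E + js!q + is!q = is!Suc q" unfolding E_def using r by simp
  finally have "c' * 2^(\<Sum>l<Suc q. js!l) \<le> 18 ^ Suc (Suc q) * 2 ^ (is!Suc q)" .
  moreover have "S \<inter> Qhat (is!Suc q) (js!Suc q) \<subseteq> {0..<1}" using IH(1) by auto
  ultimately show ?case unfolding I c'_def by simp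
qed




lemma Fset_D:
  assumes "(is, js) \<in> Fset \<epsilon> n m"
  shows "1 \<le> length is" "length js = length is" "\<forall>l<length is. 0 < is!l \<and> 0 < js!l"
    "sorted_wrt (<) is" "\<forall>l. l + 1 < length is \<longrightarrow> js!l \<le> is!(l+1) - is!l"
    "real (length is) \<le> \<epsilon> * real n"
    "real n - (\<Sum>l < length is - 1. real (js ! l)) \<le> \<epsilon> * real n"
    "is ! (length is - 1) = n" "js ! (length is - 1) = m"
  using assms unfolding Fset_def by auto

lemma F_bound:
  assumes F: "(is, js) \<in> Fset \<epsilon> n m"
  shows "Qhat_multi is js \<subseteq> {0..<1} \<and> real (card (idx (n + m) ` Qhat_multi is js)) \<le> 2 powr (6 * \<epsilon> * real n)"
proof -
  note D = Fset_D[OF F]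
  define q where "q = length is - 1"
  have q: "q < length is" "Suc q = length is" unfolding q_def using D(1) by auto
  have QM: "Qhat_multi is js = (\<Inter>l\<in>{..<Suc q}. Qhat (is!l) (js!l))"
    unfolding Qhat_multi_def q(2) ..
  have nm: "is!q = n" "js!q = m" using D(8,9) unfolding q_def by auto
  have mc: "(\<Inter>l\<in>{..<Suc q}. Qhat (is!l) (js!l)) \<subseteq> {0..<1} \<and>
     card (idx (is!q + js!q) ` (\<Inter>l\<in>{..<Suc q}. Qhat (is!l) (js!l))) * 2^(\<Sum>l<q. js!l) \<le> 18^(Suc q) * 2^(is!q)"
    by (rule multi_card[OF D(3) D(4) D(5) q(1)])
  define c where "c = card (idx (n + m) ` Qhat_multi is js)"
  define s where "s = (\<Sum>l<q. js!l)"
  have c: "c * 2 ^ s \<le> 18 ^ length is * 2 ^ n" using mc unfolding c_def s_def QM nm q(2) by simp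
  then have "real (c * 2 ^ s) \<le> real (18 ^ length is * 2 ^ n)" by (rule of_nat_mono)
  then have "real c * 2 ^ s \<le> 18 ^ length is * 2 ^ n" by simp
  then have c1: "real c \<le> 18 ^ length is * (2 ^ n / 2 ^ s)" by (simp add: field_simps)
  have "real n - real s \<le> \<epsilon> * real n" using D(7) unfolding s_def q_def by (simp add: of_nat_sum)
  have e1: "(2::real) ^ n / 2 ^ s = 2 powr (real n - real s)"
    by (simp add: powr_diff powr_realpow)
  have e2: "2 powr (real n - real s) \<le> 2 powr (\<epsilon> * real n)"
    using \<open>real n - real s \<le> \<epsilon> * real n\<close> by (rule powr_mono) simp
  have "(18::real) ^ length is \<le> 32 ^ length is" by (rule power_mono) auto
  also have "(32::real) ^ length is = 2 ^ (5 * length is)" by (simp add: power_mult)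
  also have "\<dots> = 2 powr (5 * real (length is))" using powr_realpow[of 2 "5 * length is"] by simp
  also have "\<dots> \<le> 2 powr (5 * (\<epsilon> * real n))" using D(6) by (intro powr_mono) auto
  finally have e3: "(18::real) ^ length is \<le> 2 powr (5 * (\<epsilon> * real n))" .
  have "real c \<le> 2 powr (5 * (\<epsilon> * real n)) * 2 powr (\<epsilon> * real n)"
  proof -
    have "real c \<le> 18 ^ length is * 2 powr (real n - real s)" using c1 e1 by simp
    also have "\<dots> \<le> 2 powr (5 * (\<epsilon> * real n)) * 2 powr (\<epsilon> * real n)"
      using e2 e3 by (intro mult_mono) auto
    finally show ?thesis .
  qed
  also have "\<dots> = 2 powr (6 * \<epsilon> * real n)" by (simp add: powr_add[symmetric] algebra_simps)
  finally show ?thesis using mc unfolding c_def QM by simp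
qed




definition Pset :: "nat \<Rightarrow> real \<Rightarrow> nat set set" where
  "Pset n \<epsilon> = {S. S \<subseteq> {1..n} \<and> real (card S) \<le> \<epsilon> * real n}"

lemma finite_Pset: "finite (Pset n \<epsilon>)"
proof -
  have "Pset n \<epsilon> \<subseteq> Pow {1..n}" unfolding Pset_def by auto
  then show ?thesis by (rule finite_subset) simp
qed

definition phi :: "nat list \<times> nat list \<Rightarrow> nat set \<times> nat set" where
  "phi F = (set (fst F), set (map (\<lambda>l. fst F ! l + snd F ! l) [0..<length (fst F) - 1]))"

lemma phi_sorted:
  assumes F: "(is, js) \<in> Fset \<epsilon> n m"
  shows "sorted_wrt (<) (map (\<lambda>l. is ! l + js ! l) [0..<length is - 1])"
proof -
  note D = Fset_D[OF F]
  show ?thesis unfolding sorted_wrt_iff_nth_less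
  proof (intro allI impI)
    fix a b assume ab: "a < b" "b < length (map (\<lambda>l. is ! l + js ! l) [0..<length is - 1])"
    then have b: "b < length is - 1" by simp
    have "js ! a \<le> is ! (a + 1) - is ! a" using D(5) ab b by auto
    moreover have "is ! a < is ! (a + 1)" using D(4) ab b by (simp add: sorted_wrt_iff_nth_less)
    moreover have "is ! (a + 1) \<le> is ! b" using D(4) ab b
      by (metis Suc_eq_plus1 Suc_leI le_eq_less_or_eq less_diff_conv sorted_wrt_iff_nth_less less_imp_le_nat add_lessD1)
    moreover have "0 < js ! b" using D(3) b by auto
    ultimately have "is ! a + js ! a < is ! b + js ! b" by linarith
    then show "map (\<lambda>l. is ! l + js ! l) [0..<length is - 1] ! a < map (\<lambda>l. is ! l + js ! l) [0..<length is - 1] ! b"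
      using ab b by simp
  qed
qed

lemma phi_inj: "inj_on phi (Fset \<epsilon> n m)"
proof
  fix F G assume F: "F \<in> Fset \<epsilon> n m" and G: "G \<in> Fset \<epsilon> n m" and e: "phi F = phi G"
  obtain "is" js where Fp: "F = (is, js)" by (cases F)
  obtain is' js' where Gp: "G = (is', js')" by (cases G)
  note DF = Fset_D[OF F[unfolded Fp]] and DG = Fset_D[OF G[unfolded Gp]]
  have "set is = set is'" using e unfolding Fp Gp phi_def by simp
  then have ii: "is' = is" using DF(4) DG(4) by (intro strict_sorted_equal) auto
  have "set (map (\<lambda>l. is ! l + js ! l) [0..<length is - 1]) = set (map (\<lambda>l. is ! l + js' ! l) [0..<length is - 1])"
    using e ii unfolding Fp Gp phi_def by simp
  then have me: "map (\<lambda>l. is ! l + js' ! l) [0..<length is - 1] = map (\<lambda>l. is ! l + js ! l) [0..<length is - 1]"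
    using phi_sorted[OF F[unfolded Fp]] phi_sorted[OF G[unfolded Gp]] ii by (intro strict_sorted_equal) auto
  have "js = js'"
  proof (rule nth_equalityI)
    show "length js = length js'" using DF(2) DG(2) ii by simp
    fix l assume l: "l < length js"
    show "js ! l = js' ! l"
    proof (cases "l < length is - 1")
      case True
      have "map (\<lambda>l. is ! l + js' ! l) [0..<length is - 1] ! l = map (\<lambda>l. is ! l + js ! l) [0..<length is - 1] ! l"
        by (subst me) (rule refl)
      then show ?thesis using True by simp
    next
      case False
      then have "l = length is - 1" using l DF(2) by simp
      then show ?thesis using DF(9) DG(9) ii by simp
    qed
  qed
  then show "F = G" using Fp Gp ii by simp
qed

lemma phi_image: "phi ` Fset \<epsilon> n m \<subseteq> Pset n \<epsilon> \<times> Pset n \<epsilon>"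
proof
  fix P assume "P \<in> phi ` Fset \<epsilon> n m"
  then obtain "is" js where F: "(is, js) \<in> Fset \<epsilon> n m" and P: "P = phi (is, js)" by auto
  note D = Fset_D[OF F]
  have le_n: "is ! l \<le> n" if "l < length is" for l
  proof (cases "l = length is - 1")
    case True then show ?thesis using D(8) by simp
  next
    case False
    then have "l < length is - 1" using that by simp
    then have "is ! l < is ! (length is - 1)" using D(4) D(1) by (simp add: sorted_wrt_iff_nth_less)
    then show ?thesis using D(8) by simp
  qed
  have A: "set is \<in> Pset n \<epsilon>"
  proof -
    have "set is \<subseteq> {1..n}" using D(3) le_n by (auto simp: in_set_conv_nth Suc_le_eq)
    moreover have "real (card (set is)) \<le> \<epsilon> * real n"
      using card_length[of "is"] D(6) by (meson of_nat_le_iff order_trans)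
    ultimately show ?thesis unfolding Pset_def by simp
  qed
  have B: "set (map (\<lambda>l. is ! l + js ! l) [0..<length is - 1]) \<in> Pset n \<epsilon>"
  proof -
    have "set (map (\<lambda>l. is ! l + js ! l) [0..<length is - 1]) \<subseteq> {1..n}"
    proof
      fix v assume "v \<in> set (map (\<lambda>l. is ! l + js ! l) [0..<length is - 1])"
      then obtain l where l: "l < length is - 1" "v = is ! l + js ! l" by auto
      have "js ! l \<le> is ! (l + 1) - is ! l" using D(5) l by auto
      moreover have "is ! l < is ! (l + 1)" using D(4) l by (simp add: sorted_wrt_iff_nth_less)
      moreover have "is ! (l + 1) \<le> n" using le_n l by simp
      moreover have "0 < js ! l" using D(3) l by auto
      ultimately show "v \<in> {1..n}" using l by auto
    qed
    moreover have "real (card (set (map (\<lambda>l. is ! l + js ! l) [0..<length is - 1]))) \<le> \<epsilon> * real n"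
    proof -
      have "card (set (map (\<lambda>l. is ! l + js ! l) [0..<length is - 1])) \<le> length is"
        using card_length[of "map (\<lambda>l. is ! l + js ! l) [0..<length is - 1]"] by simp
      then show ?thesis using D(6) by (meson of_nat_le_iff order_trans)
    qed
    ultimately show ?thesis unfolding Pset_def by simp
  qed
  show "P \<in> Pset n \<epsilon> \<times> Pset n \<epsilon>" using A B unfolding P phi_def by simp
qed

lemma Fset_card: "finite (Fset \<epsilon> n m) \<and> card (Fset \<epsilon> n m) \<le> card (Pset n \<epsilon>) * card (Pset n \<epsilon>)"
proof -
  have fin: "finite (Pset n \<epsilon> \<times> Pset n \<epsilon>)" using finite_Pset by simp
  have "finite (phi ` Fset \<epsilon> n m)" using finite_subset[OF phi_image fin] .
  then have f: "finite (Fset \<epsilon> n m)" using phi_inj finite_imageD by blast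
  have "card (Fset \<epsilon> n m) = card (phi ` Fset \<epsilon> n m)" using phi_inj by (simp add: card_image)
  also have "\<dots> \<le> card (Pset n \<epsilon> \<times> Pset n \<epsilon>)" using fin phi_image by (rule card_mono)
  finally show ?thesis using f by (simp add: card_cartesian_product)
qed

lemma card_Pset:
  assumes x: "0 < x" "x \<le> 1"
  shows "real (card (Pset n \<epsilon>)) \<le> x powr (-(\<epsilon> * real n)) * (1 + x) ^ n"
proof -
  define K where "K = {k. k \<le> n \<and> real k \<le> \<epsilon> * real n}"
  have sub: "Pset n \<epsilon> \<subseteq> (\<Union>k\<in>K. {S. S \<subseteq> {1..n} \<and> card S = k})"
  proof
    fix S assume S: "S \<in> Pset n \<epsilon>"
    then have "S \<subseteq> {1..n}" unfolding Pset_def by simp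
    then have "card S \<le> n" using card_mono[of "{1..n}" S] by simp
    then show "S \<in> (\<Union>k\<in>K. {S. S \<subseteq> {1..n} \<and> card S = k})" using S unfolding K_def Pset_def by auto
  qed
  have finK: "finite K" unfolding K_def by simp
  have "card (Pset n \<epsilon>) \<le> card (\<Union>k\<in>K. {S. S \<subseteq> {1..n} \<and> card S = k})"
    using sub finK by (intro card_mono) auto
  also have "\<dots> \<le> (\<Sum>k\<in>K. card {S. S \<subseteq> {1..n} \<and> card S = k})" using finK by (rule card_UN_le)
  also have "\<dots> = (\<Sum>k\<in>K. n choose k)" by (simp add: n_subsets)
  finally have "real (card (Pset n \<epsilon>)) \<le> (\<Sum>k\<in>K. real (n choose k))"
    by (metis of_nat_le_iff of_nat_sum)
  also have "\<dots> \<le> (\<Sum>k\<in>K. real (n choose k) * x ^ k * x powr (-(\<epsilon> * real n)))"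
  proof (rule sum_mono)
    fix k assume k: "k \<in> K"
    have "x ^ k * x powr (-(\<epsilon> * real n)) = x powr (real k - \<epsilon> * real n)"
      using x by (simp add: powr_realpow[symmetric] powr_add[symmetric])
    also have "\<dots> \<ge> x powr 0" using k x unfolding K_def by (intro powr_mono') auto
    finally have "1 \<le> x ^ k * x powr (-(\<epsilon> * real n))" using x by simp
    then show "real (n choose k) \<le> real (n choose k) * x ^ k * x powr (-(\<epsilon> * real n))"
      by (metis mult.assoc mult_le_cancel_left1 of_nat_0_le_iff not_le order_le_less_trans mult_le_cancel_left2 mult.right_neutral)
  qed
  also have "\<dots> \<le> (\<Sum>k\<le>n. real (n choose k) * x ^ k * x powr (-(\<epsilon> * real n)))"
    using x unfolding K_def by (intro sum_mono2) auto
  also have "\<dots> = (\<Sum>k\<le>n. real (n choose k) * x ^ k * 1 ^ (n - k)) * x powr (-(\<epsilon> * real n))"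
    by (simp add: sum_distrib_right)
  also have "(\<Sum>k\<le>n. real (n choose k) * x ^ k * 1 ^ (n - k)) = (x + 1) ^ n"
    by (rule binomial_ring[symmetric])
  finally show ?thesis by (simp add: add.commute mult.commute)
qed




definition QF :: "real \<Rightarrow> nat \<Rightarrow> nat \<Rightarrow> real set" where
  "QF \<epsilon> n m = (\<Union>F \<in> Fset \<epsilon> n m. Qhat_multi (fst F) (snd F))"

lemma Zset_sub:
  assumes "x \<in> Zset \<epsilon>" "1 \<le> N"
  shows "\<exists>n\<ge>N. \<exists>m\<ge>1. x \<in> QF \<epsilon> n m"
proof -
  have "x \<in> (\<Union> n \<in> {N..}. \<Union> m \<in> {1..}. \<Union> (is, js) \<in> Fset \<epsilon> n m. Qhat_multi is js)"
    using INT_D[OF assms(1)[unfolded Zset_def], of N] assms(2) by simp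
  then obtain n m where nm: "n \<ge> N" "m \<ge> 1" "x \<in> (\<Union> (is, js) \<in> Fset \<epsilon> n m. Qhat_multi is js)"
    by auto
  obtain F where F: "F \<in> Fset \<epsilon> n m" "x \<in> (case F of (is, js) \<Rightarrow> Qhat_multi is js)"
    using UN_E[OF nm(3)] by metis
  then have "x \<in> QF \<epsilon> n m" unfolding QF_def by (auto simp: split_beta)
  then show ?thesis using nm by blast
qed

lemma W_bound:
  assumes G: "\<And>n m. real (card (Fset \<epsilon> n m)) \<le> 2 powr (G * real n)"
  shows "QF \<epsilon> n m \<subseteq> {0..<1} \<and> finite (idx (n + m) ` QF \<epsilon> n m) \<and>
    real (card (idx (n + m) ` QF \<epsilon> n m)) \<le> 2 powr ((G + 6 * \<epsilon>) * real n)"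
proof -
  have FB: "\<And>F. F \<in> Fset \<epsilon> n m \<Longrightarrow> Qhat_multi (fst F) (snd F) \<subseteq> {0..<1} \<and>
     real (card (idx (n + m) ` Qhat_multi (fst F) (snd F))) \<le> 2 powr (6 * \<epsilon> * real n)"
    by (rule F_bound) simp
  have sub: "QF \<epsilon> n m \<subseteq> {0..<1}" unfolding QF_def using FB by blast
  have finF: "finite (Fset \<epsilon> n m)" using Fset_card by blast
  have img: "idx (n + m) ` QF \<epsilon> n m = (\<Union>F \<in> Fset \<epsilon> n m. idx (n + m) ` Qhat_multi (fst F) (snd F))"
    unfolding QF_def by (rule image_UN)
  have "card (idx (n + m) ` QF \<epsilon> n m) \<le> (\<Sum>F \<in> Fset \<epsilon> n m. card (idx (n + m) ` Qhat_multi (fst F) (snd F)))"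
    unfolding img using finF by (rule card_UN_le)
  then have "real (card (idx (n + m) ` QF \<epsilon> n m)) \<le> (\<Sum>F \<in> Fset \<epsilon> n m. real (card (idx (n + m) ` Qhat_multi (fst F) (snd F))))"
    by (metis of_nat_le_iff of_nat_sum)
  also have "\<dots> \<le> (\<Sum>F \<in> Fset \<epsilon> n m. 2 powr (6 * \<epsilon> * real n))" using FB by (intro sum_mono) auto
  also have "\<dots> = real (card (Fset \<epsilon> n m)) * 2 powr (6 * \<epsilon> * real n)" by simp
  also have "\<dots> \<le> 2 powr (G * real n) * 2 powr (6 * \<epsilon> * real n)" using G by (intro mult_right_mono) auto
  also have "\<dots> = 2 powr ((G + 6 * \<epsilon>) * real n)" by (simp add: powr_add[symmetric] algebra_simps)
  finally show ?thesis using sub finite_idx_img[OF sub] by simp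
qed

lemma hcontent_le:
  fixes u :: "nat \<times> nat \<times> nat \<Rightarrow> real set"
  assumes "\<And>t. u t \<subseteq> {0..<1}" "\<And>t. circ_diam (u t) \<le> \<delta>" "A \<subseteq> (\<Union>t. u t)"
  shows "hcontent s \<delta> A \<le> (\<Sum>a. \<Sum>b. \<Sum>w. ennreal (circ_diam (u (a, b, w)) powr s))"
proof -
  define U where "U k = u (fst (prod_decode k), prod_decode (snd (prod_decode k)))" for k
  have "U \<in> {U :: nat \<Rightarrow> real set. (\<forall>k. U k \<subseteq> {0..<1} \<and> circ_diam (U k) \<le> \<delta>) \<and> A \<subseteq> (\<Union>k. U k)}"
  proof (intro CollectI conjI allI)
    fix k show "U k \<subseteq> {0..<1}" "circ_diam (U k) \<le> \<delta>" unfolding U_def using assms by auto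
  next
    show "A \<subseteq> (\<Union>k. U k)"
    proof
      fix x assume "x \<in> A"
      then obtain a b w where "x \<in> u (a, b, w)" using assms(3) by auto
      moreover have "U (prod_encode (a, prod_encode (b, w))) = u (a, b, w)"
        unfolding U_def by (simp add: prod_encode_inverse)
      ultimately show "x \<in> (\<Union>k. U k)" by (metis UN_I UNIV_I)
    qed
  qed
  then have "hcontent s \<delta> A \<le> (\<Sum>k. ennreal (circ_diam (U k) powr s))"
    unfolding hcontent_def by (rule INF_lower)
  also have "\<dots> = (\<Sum>a. \<Sum>b. \<Sum>w. ennreal (circ_diam (u (a, b, w)) powr s))"
  proof -
    define f where "f a b w = ennreal (circ_diam (u (a, b, w)) powr s)" for a b w
    have "(\<Sum>k. ennreal (circ_diam (U k) powr s)) =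
      (\<Sum>k. (\<lambda>(a, c). (\<lambda>(b, w). f a b w) (prod_decode c)) (prod_decode k))"
      by (rule suminf_cong) (simp add: U_def f_def split_beta)
    also have "\<dots> = (\<Sum>a. \<Sum>c. (\<lambda>(b, w). f a b w) (prod_decode c))"
      by (rule suminf_ennreal_2dimen) simp
    also have "\<dots> = (\<Sum>a. \<Sum>b. \<Sum>w. f a b w)"
    proof (rule suminf_cong)
      fix a
      show "(\<Sum>c. (\<lambda>(b, w). f a b w) (prod_decode c)) = (\<Sum>b. \<Sum>w. f a b w)"
        by (rule suminf_ennreal_2dimen) simp
    qed
    finally show ?thesis unfolding f_def .
  qed
  finally show ?thesis .
qed




lemma pow_powr2: "(2 powr (a::real)) ^ n = 2 powr (a * real n)"
  by (simp add: powr_realpow[symmetric] powr_powr)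

lemma hmeasure_zero:
  assumes e: "0 < \<epsilon>" and G: "\<And>n m. real (card (Fset \<epsilon> n m)) \<le> 2 powr (G * real n)"
    and s: "G + 7 * \<epsilon> \<le> s" "0 < s"
  shows "hmeasure s (Zset \<epsilon>) = 0"
proof -
  define \<rho> :: real where "\<rho> = 2 powr (- \<epsilon>)"
  define \<sigma> :: real where "\<sigma> = 2 powr (- s)"
  have \<rho>: "0 < \<rho>" "\<rho> < 1" unfolding \<rho>_def using e by (auto intro: powr_less_mono[of "-\<epsilon>" 0 2, simplified])
  have \<sigma>: "0 < \<sigma>" "\<sigma> < 1" unfolding \<sigma>_def using s by (auto intro: powr_less_mono[of "-s" 0 2, simplified])
  have hc: "hcontent s \<delta> (Zset \<epsilon>) \<le> 0" if \<delta>: "0 < \<delta>" for \<delta>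
  proof (rule ennreal_le_epsilon)
    fix \<eta> :: real assume \<eta>: "0 < \<eta>"
    define C where "C = 1 / ((1 - \<rho>) * (1 - \<sigma>))"
    have l1: "(\<lambda>N. \<rho> ^ N * C) \<longlonglongrightarrow> 0"
      by (intro tendsto_mult_left_zero LIMSEQ_power_zero) (use \<rho> in simp)
    have l2: "(\<lambda>N. (1/2::real) ^ N) \<longlonglongrightarrow> 0"
      by (intro LIMSEQ_power_zero) simp
    have "eventually (\<lambda>N. \<rho> ^ N * C < \<eta> \<and> (1/2::real) ^ N < \<delta> \<and> 1 \<le> N) sequentially"
      using order_tendstoD(2)[OF l1 \<eta>] order_tendstoD(2)[OF l2 \<delta>] eventually_ge_at_top[of "1::nat"]
      by eventually_elim auto
    then obtain N where N: "\<rho> ^ N * C < \<eta>" "(1/2::real) ^ N < \<delta>" "1 \<le> N"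
      unfolding eventually_sequentially by auto
    define W where "W a b = idx ((a + N) + (b + 1)) ` QF \<epsilon> (a + N) (b + 1)" for a b
    define u where "u t = (case t of (a, b, w) \<Rightarrow> if w \<in> W a b then dyadic ((a + N) + (b + 1)) w else {})" for t
    have WB: "QF \<epsilon> (a + N) (b + 1) \<subseteq> {0..<1} \<and> finite (W a b) \<and>
      real (card (W a b)) \<le> 2 powr ((G + 6 * \<epsilon>) * real (a + N))" for a b
      unfolding W_def by (rule W_bound[OF G])
    have Wlt: "w < 2 ^ ((a + N) + (b + 1))" if "w \<in> W a b" for a b w
    proof -
      have "w \<in> idx ((a + N) + (b + 1)) ` QF \<epsilon> (a + N) (b + 1)" using that unfolding W_def .
      then obtain x where "w = idx ((a + N) + (b + 1)) x" "x \<in> QF \<epsilon> (a + N) (b + 1)"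
        by (rule imageE)
      moreover have "0 \<le> x" "x < 1" using WB[of a b] calculation(2) by auto
      ultimately show ?thesis using idx_lt by presburger
    qed
    have diam_le: "circ_diam (dyadic ((a + N) + (b + 1)) w) \<le> (1/2) ^ ((a + N) + (b + 1))" for a b w
      using circ_diam_dyadic[of "(a + N) + (b + 1)" w] by (simp add: power_one_over)
    have u1: "u t \<subseteq> {0..<1}" for t
      unfolding u_def using Wlt dyadic_sub by (auto split: prod.splits)
    have u2: "circ_diam (u t) \<le> \<delta>" for t
    proof -
      obtain a b w where t: "t = (a, b, w)" by (cases t) auto
      show ?thesis
      proof (cases "w \<in> W a b")
        case True
        have "(1/2::real) ^ ((a + N) + (b + 1)) \<le> (1/2) ^ N" by (rule power_decreasing) auto
        then show ?thesis using True diam_le[of a b w] N(2) unfolding u_def t by simp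
      next
        case False
        then show ?thesis using \<delta> unfolding u_def t by (simp add: circ_diam_def)
      qed
    qed
    have u3: "Zset \<epsilon> \<subseteq> (\<Union>t. u t)"
    proof
      fix x assume "x \<in> Zset \<epsilon>"
      then obtain n m where nm: "n \<ge> N" "m \<ge> 1" "x \<in> QF \<epsilon> n m" using Zset_sub N(3) by blast
      define a where "a = n - N"
      define b where "b = m - 1"
      have ab: "a + N = n" "b + 1 = m" unfolding a_def b_def using nm by auto
      define w where "w = idx (n + m) x"
      have "x \<in> {0..<1}" using WB[of a b] nm(3) ab by auto
      then have "x \<in> dyadic (n + m) w" unfolding w_def by (simp add: mem_dyadic)
      moreover have "w \<in> W a b" unfolding W_def ab w_def using nm(3) by simp
      ultimately have "x \<in> u (a, b, w)" unfolding u_def using ab by simp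
      then show "x \<in> (\<Union>t. u t)" by blast
    qed
    have "hcontent s \<delta> (Zset \<epsilon>) \<le> (\<Sum>a. \<Sum>b. \<Sum>w. ennreal (circ_diam (u (a, b, w)) powr s))"
      by (rule hcontent_le[OF u1 u2 u3])
    also have "\<dots> \<le> (\<Sum>a. \<Sum>b. ennreal (\<rho> ^ N * \<rho> ^ a * \<sigma> ^ b))"
    proof (intro suminf_le summableI allI)
      fix a b
      define r where "r = (a + N) + (b + 1)"
      have z: "ennreal (circ_diam (u (a, b, w)) powr s) = 0" if "w \<notin> W a b" for w
        using that unfolding u_def by (simp add: circ_diam_def)
      have "(\<Sum>w. ennreal (circ_diam (u (a, b, w)) powr s)) = (\<Sum>w\<in>W a b. ennreal (circ_diam (u (a, b, w)) powr s))"
        by (rule suminf_finite) (use WB z in auto)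
      also have "\<dots> \<le> (\<Sum>w\<in>W a b. ennreal (((1/2) ^ r) powr s))"
      proof (rule sum_mono)
        fix w assume w: "w \<in> W a b"
        have "circ_diam (u (a, b, w)) \<le> (1/2) ^ r" unfolding u_def r_def using w diam_le by simp
        then show "ennreal (circ_diam (u (a, b, w)) powr s) \<le> ennreal (((1/2) ^ r) powr s)"
          using s circ_diam_nonneg by (intro ennreal_leI powr_mono2) auto
      qed
      also have "\<dots> = ennreal (real (card (W a b)) * ((1/2) ^ r) powr s)"
        by (simp add: ennreal_mult ennreal_of_nat_eq_real_of_nat)
      also have "real (card (W a b)) * ((1/2) ^ r) powr s \<le> \<rho> ^ N * \<rho> ^ a * \<sigma> ^ b"
      proof -
        have h1: "((1/2::real) ^ r) powr s = 2 powr (- (real r * s))"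
          by (simp add: power_one_over powr_realpow[symmetric] powr_minus_divide[symmetric] powr_powr)
        have "real (card (W a b)) * ((1/2) ^ r) powr s \<le> 2 powr ((G + 6 * \<epsilon>) * real (a + N)) * 2 powr (- (real r * s))"
          unfolding h1 using WB[of a b] by (intro mult_right_mono) auto
        also have "\<dots> = 2 powr ((G + 6 * \<epsilon>) * real (a + N) - real r * s)" by (simp add: powr_add[symmetric])
        also have "\<dots> \<le> 2 powr (- \<epsilon> * real (a + N) + (- s) * real b)"
        proof (rule powr_mono)
          have "(G + 6 * \<epsilon>) * real (a + N) \<le> (s - \<epsilon>) * real (a + N)" using s by (intro mult_right_mono) auto
          moreover have "real r * s = real (a + N) * s + real b * s + s" unfolding r_def by (simp add: algebra_simps)
          ultimately show "(G + 6 * \<epsilon>) * real (a + N) - real r * s \<le> - \<epsilon> * real (a + N) + (- s) * real b"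
            using s by (simp add: algebra_simps)
        qed simp
        also have "\<dots> = \<rho> ^ (a + N) * \<sigma> ^ b" unfolding \<rho>_def \<sigma>_def pow_powr2 by (simp add: powr_add[symmetric])
        also have "\<dots> = \<rho> ^ N * \<rho> ^ a * \<sigma> ^ b" by (simp add: power_add)
        finally show ?thesis .
      qed
      then have "ennreal (real (card (W a b)) * ((1/2) ^ r) powr s) \<le> ennreal (\<rho> ^ N * \<rho> ^ a * \<sigma> ^ b)"
        by (rule ennreal_leI)
      finally show "(\<Sum>w. ennreal (circ_diam (u (a, b, w)) powr s)) \<le> ennreal (\<rho> ^ N * \<rho> ^ a * \<sigma> ^ b)" .
    qed
    also have "\<dots> = (\<Sum>a. ennreal (\<rho> ^ N * \<rho> ^ a * (1 / (1 - \<sigma>))))"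
    proof (rule suminf_cong)
      fix a
      have "(\<lambda>b. (\<rho> ^ N * \<rho> ^ a) * \<sigma> ^ b) sums ((\<rho> ^ N * \<rho> ^ a) * (1 / (1 - \<sigma>)))"
        by (rule sums_mult, rule geometric_sums) (use \<sigma> in simp)
      then show "(\<Sum>b. ennreal (\<rho> ^ N * \<rho> ^ a * \<sigma> ^ b)) = ennreal (\<rho> ^ N * \<rho> ^ a * (1 / (1 - \<sigma>)))"
        by (intro suminf_ennreal_eq) (use \<rho> \<sigma> in auto)
    qed
    also have "\<dots> = ennreal (\<rho> ^ N * (1 / (1 - \<rho>)) * (1 / (1 - \<sigma>)))"
    proof -
      have "(\<lambda>a. \<rho> ^ N * \<rho> ^ a) sums (\<rho> ^ N * (1 / (1 - \<rho>)))"
        by (rule sums_mult, rule geometric_sums) (use \<rho> in simp)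
      then have "(\<lambda>a. \<rho> ^ N * \<rho> ^ a * (1 / (1 - \<sigma>))) sums (\<rho> ^ N * (1 / (1 - \<rho>)) * (1 / (1 - \<sigma>)))"
        by (rule sums_mult2)
      then show ?thesis by (intro suminf_ennreal_eq) (use \<rho> \<sigma> in auto)
    qed
    also have "\<rho> ^ N * (1 / (1 - \<rho>)) * (1 / (1 - \<sigma>)) = \<rho> ^ N * C" unfolding C_def by simp
    also have "ennreal (\<rho> ^ N * C) \<le> ennreal \<eta>" using N(1) by (intro ennreal_leI) simp
    finally show "hcontent s \<delta> (Zset \<epsilon>) \<le> 0 + ennreal \<eta>" by simp
  qed
  have "hmeasure s (Zset \<epsilon>) \<le> 0" unfolding hmeasure_def using hc by (intro SUP_least) auto
  then show ?thesis by simp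
qed

theorem proposition4p6:
  shows "\<exists>\<epsilon>' :: real \<Rightarrow> real.
     (\<forall>\<epsilon> > 0. \<epsilon>' \<epsilon> > 0) \<and> (\<epsilon>' \<longlongrightarrow> 0) (at_right 0) \<and>
     (\<forall>\<epsilon> > 0.
        (\<exists>C. \<forall>n m. real (card (Fset \<epsilon> n m)) \<le> C * 2 powr (\<epsilon>' \<epsilon> * real n)) \<and>
        hdim (Zset \<epsilon>) \<le> \<epsilon>' \<epsilon> + \<epsilon> + \<epsilon> * log 2 15)"
proof -
  define xf :: "real \<Rightarrow> real" where "xf e = min 1 (sqrt e)" for e
  define g where "g e = 2 * log 2 (1 + xf e) - 2 * e * log 2 (xf e)" for e
  define ep where "ep e = g e + 6 * e" for e
  have xf: "0 < xf e" "xf e \<le> 1" if "0 < e" for e using that unfolding xf_def by auto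
  have gpos: "0 < g e" if e: "0 < e" for e
  proof -
    have "0 < log 2 (1 + xf e)" using xf[OF e] by (subst zero_less_log_cancel_iff) auto
    moreover have "log 2 (xf e) \<le> 0" using xf[OF e] by (subst log_le_zero_cancel_iff) auto
    moreover have "e * log 2 (xf e) \<le> 0" using e calculation(2) by (intro mult_nonneg_nonpos) auto
    ultimately show ?thesis unfolding g_def by linarith
  qed
  have card: "real (card (Fset e n m)) \<le> 2 powr (g e * real n)" if e: "0 < e" for e n m
  proof -
    define x where "x = xf e"
    have x: "0 < x" "x \<le> 1" unfolding x_def using xf[OF e] by auto
    define B where "B = x powr (-(e * real n)) * (1 + x) ^ n"
    have B0: "0 \<le> B" unfolding B_def using x by simp
    have cP: "real (card (Pset n e)) \<le> B" unfolding B_def by (rule card_Pset[OF x])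
    have "card (Fset e n m) \<le> card (Pset n e) * card (Pset n e)" using Fset_card by blast
    then have "real (card (Fset e n m)) \<le> real (card (Pset n e)) * real (card (Pset n e))"
      by (metis of_nat_le_iff of_nat_mult)
    also have "\<dots> \<le> B * B" using cP B0 by (intro mult_mono) auto
    also have "B = 2 powr (log 2 x * (-(e * real n)) + log 2 (1 + x) * real n)"
    proof -
      have "x powr (-(e * real n)) = (2 powr (log 2 x)) powr (-(e * real n))"
        using x by (simp add: powr_log_cancel)
      also have "\<dots> = 2 powr (log 2 x * (-(e * real n)))" by (simp only: powr_powr)
      finally have A: "x powr (-(e * real n)) = 2 powr (log 2 x * (-(e * real n)))" .
      have "(1 + x) ^ n = (1 + x) powr (real n)" using x by (simp add: powr_realpow)
      also have "\<dots> = (2 powr (log 2 (1 + x))) powr (real n)" using x by (simp add: powr_log_cancel)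
      also have "\<dots> = 2 powr (log 2 (1 + x) * real n)" by (simp only: powr_powr)
      finally have B: "(1 + x) ^ n = 2 powr (log 2 (1 + x) * real n)" .
      show ?thesis unfolding B_def A B by (simp add: powr_add[symmetric])
    qed
    also have "2 powr (log 2 x * (-(e * real n)) + log 2 (1 + x) * real n) *
               2 powr (log 2 x * (-(e * real n)) + log 2 (1 + x) * real n) = 2 powr (g e * real n)"
      unfolding g_def x_def[symmetric] by (simp add: powr_add[symmetric] algebra_simps)
    finally show ?thesis .
  qed
  have lim: "(ep \<longlongrightarrow> 0) (at_right 0)"
  proof -
    have ev: "eventually (\<lambda>e. (\<lambda>e::real. 2 * log 2 (1 + sqrt e) - 2 * e * log 2 (sqrt e) + 6 * e) e = ep e) (at_right 0)"
      using eventually_at_right_real[of 0 "1::real", OF zero_less_one]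
    proof (rule eventually_mono)
      fix e :: real assume "e \<in> {0<..<1}"
      then have "sqrt e \<le> 1" by simp
      then have "xf e = sqrt e" unfolding xf_def by simp
      then show "2 * log 2 (1 + sqrt e) - 2 * e * log 2 (sqrt e) + 6 * e = ep e"
        unfolding ep_def g_def by simp
    qed
    have "((\<lambda>e::real. 2 * log 2 (1 + sqrt e) - 2 * e * log 2 (sqrt e) + 6 * e) \<longlongrightarrow> 0) (at_right 0)"
      by real_asymp
    then show ?thesis using tendsto_cong[OF ev] by simp
  qed
  show ?thesis
  proof (intro exI[of _ ep] conjI allI impI)
    fix e :: real assume e: "0 < e"
    show "0 < ep e" unfolding ep_def using gpos[OF e] e by simp
  next
    show "(ep \<longlongrightarrow> 0) (at_right 0)" by (rule lim)
  next
    fix e :: real assume e: "0 < e"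
    show "\<exists>C. \<forall>n m. real (card (Fset e n m)) \<le> C * 2 powr (ep e * real n)"
    proof (intro exI[of _ 1] allI)
      fix n m
      have "2 powr (g e * real n) \<le> 2 powr (ep e * real n)"
        unfolding ep_def using e by (intro powr_mono mult_right_mono) auto
      then have "real (card (Fset e n m)) \<le> 2 powr (ep e * real n)" by (rule order_trans[OF card[OF e, of n m]])
      then show "real (card (Fset e n m)) \<le> 1 * 2 powr (ep e * real n)" by simp
    qed
  next
    fix e :: real assume e: "0 < e"
    define s0 where "s0 = ep e + e + e * log 2 15"
    have l15: "0 \<le> log 2 (15::real)" by simp
    have l15': "0 \<le> e * log 2 15" using e l15 by simp
    have s0: "g e + 7 * e \<le> s0" "0 < s0" unfolding s0_def ep_def using e gpos[OF e] l15' by linarith+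
    have "hmeasure s0 (Zset e) = 0" by (rule hmeasure_zero[OF e card[OF e] s0])
    then have mem: "s0 \<in> {s. 0 \<le> s \<and> hmeasure s (Zset e) = 0}" using s0 by simp
    have "bdd_below {s. 0 \<le> s \<and> hmeasure s (Zset e) = 0}" by (rule bdd_belowI[of _ 0]) simp
    then have "hdim (Zset e) \<le> s0" unfolding hdim_def using mem by (intro cInf_lower)
    then show "hdim (Zset e) \<le> ep e + e + e * log 2 15" unfolding s0_def .
  qed
qed

end
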